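(* Let $n\ge 1$ and let $c_1(Q_n)$ be the exponent (largest invariant factor) of the sandpile group $K(Q_n)$ of the $n$-dimensional hypercube. Then $c_1(Q_n)$ is the minimum positive integer $C$ such that for all integers $a,b$ with $2\le a\le n$ and $1\le b\le a$, $$\frac{C}{2^{n-a}}\sum_{i=0}^{n-a}\frac{\binom{n-a}{i}}{2(b+i)}\in\mathbb{Z}.$$
   Context: $Q_n$ is the graph with vertex set $\mathbb{F}_2^n$ in which $u,w$ are adjacent iff they differ in exactly one coordinate. Its Laplacian is $L=D-A$, and $\operatorname{coker}(L:\mathbb{Z}^{2^n}\to\mathbb{Z}^{2^n})\cong\mathbb{Z}\oplus K(Q_n)$ with $K(Q_n)$ finite abelian (the sandpile group); the exponent of the trivial group is $1$. *)

theory Defs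
  imports Complex_Main
begin

text \<open>Vertices of Q_n: F_2^n, encoded as subsets of {0..<n} (indicator vectors).\<close>

definition hyp_vertices :: "nat \<Rightarrow> nat set set" where
  "hyp_vertices n = Pow {..<n}"

definition hyp_adj :: "nat set \<Rightarrow> nat set \<Rightarrow> bool" where
  "hyp_adj u w \<longleftrightarrow> card ((u - w) \<union> (w - u)) = 1"

definition hyp_laplacian :: "nat \<Rightarrow> (nat set \<Rightarrow> int) \<Rightarrow> nat set \<Rightarrow> int" where
  "hyp_laplacian n f u =
     int (card {w \<in> hyp_vertices n. hyp_adj u w}) * f u
     - (\<Sum>w\<in>{w \<in> hyp_vertices n. hyp_adj u w}. f w)"

definition in_lap_image :: "nat \<Rightarrow> (nat set \<Rightarrow> int) \<Rightarrow> bool" where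
  "in_lap_image n x \<longleftrightarrow>
     (\<exists>f. \<forall>u\<in>hyp_vertices n. x u = hyp_laplacian n f u)"

text \<open>The class of x in coker L is a torsion element; the torsion subgroup of
  coker L = Z + K(Q_n) is (isomorphic to) the sandpile group K(Q_n).\<close>

definition coker_torsion :: "nat \<Rightarrow> (nat set \<Rightarrow> int) \<Rightarrow> bool" where
  "coker_torsion n x \<longleftrightarrow> (\<exists>m::nat. m > 0 \<and> in_lap_image n (\<lambda>u. int m * x u))"

definition sandpile_exponent :: "nat \<Rightarrow> nat" where
  "sandpile_exponent n =
     (LEAST e::nat. e > 0 \<and>
        (\<forall>x. coker_torsion n x \<longrightarrow> in_lap_image n (\<lambda>u. int e * x u)))"

definition exp_condition :: "nat \<Rightarrow> nat \<Rightarrow> bool" where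
  "exp_condition n C \<longleftrightarrow> C > 0 \<and>
     (\<forall>a b::nat. 2 \<le> a \<and> a \<le> n \<and> 1 \<le> b \<and> b \<le> a \<longrightarrow>
        (of_nat C / 2 ^ (n - a)) *
        (\<Sum>i=0..n-a. of_nat ((n - a) choose i) / (2 * of_nat (b + i))) \<in> (\<int> :: rat set))"

end

theory Submission
  imports Defs
begin


fun Phi :: "nat \<Rightarrow> nat \<Rightarrow> rat" where
  "Phi 0 b = (2^(b+1) - 1) / (of_nat (b+1) * 2^(b+1))"
| "Phi (Suc a) b = Phi a b - Phi a (Suc b)"

declare Phi.simps[simp del]
lemma PhiS: "Phi (Suc a) b = Phi a b - Phi a (Suc b)" by (simp add: Phi.simps)

lemma Phi0_mult: "of_nat (b+1) * Phi 0 b = 1 - 1/2^(b+1)"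
proof -
  have h: "(of_nat (b+1)::rat) \<noteq> 0" "(2::rat)^(b+1) \<noteq> 0" by simp_all
  have g: "\<And>c X::rat. c \<noteq> 0 \<Longrightarrow> X \<noteq> 0 \<Longrightarrow> c * ((X - 1) / (c * X)) = 1 - 1/X"
    by (simp add: field_simps)
  show ?thesis unfolding Phi.simps(1) by (rule g[OF h])
qed

lemma Phi_rec: "of_nat (b+1) * Phi (Suc a) b - of_nat (a+1) * Phi a (Suc b) = - 1 / 2^(a+b+2)"
proof (induction a arbitrary: b)
  case 0
  have a1: "of_nat (b+1) * Phi 0 b = 1 - 1/2^(b+1)" by (rule Phi0_mult)
  have a2: "of_nat (b+2) * Phi 0 (Suc b) = 1 - 1/2^(b+2)" using Phi0_mult[of "Suc b"] by simp
  have a3: "Phi 1 b = Phi 0 b - Phi 0 (Suc b)" using PhiS[of 0 b] by simp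
  have p: "(1::rat)/2^(b+2) = (1/2^(b+1))/2" by simp
  have "of_nat (b+1) * Phi 1 b - of_nat (0+1) * Phi 0 (Suc b)
     = of_nat (b+1) * Phi 0 b - of_nat (b+2) * Phi 0 (Suc b)" unfolding a3 by (simp add: algebra_simps)
  also have "\<dots> = - 1 / 2^(0+b+2)" unfolding a1 a2 p by simp
  finally show ?case by simp
next
  case (Suc a)
  have i1: "of_nat (b+1) * Phi (Suc a) b - of_nat (a+1) * Phi a (Suc b) = - 1 / 2^(a+b+2)" using Suc by simp
  have i2: "of_nat (b+2) * Phi (Suc a) (Suc b) - of_nat (a+1) * Phi a (Suc (Suc b)) = - 1 / 2^(a+b+3)"
  proof -
    have "a + Suc b + 2 = a+b+3" by simp
    then show ?thesis using Suc[of "Suc b"] by (simp only: ) (simp add: numeral_eq_Suc)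
  qed
  have e1: "Phi (Suc (Suc a)) b = Phi (Suc a) b - Phi (Suc a) (Suc b)" by (rule PhiS)
  have e2: "Phi (Suc a) (Suc b) = Phi a (Suc b) - Phi a (Suc (Suc b))" by (rule PhiS)
  have p: "(1::rat)/2^(a+b+3) = (1/2^(a+b+2))/2" by (simp add: power_add)
  have "of_nat (b+1) * Phi (Suc (Suc a)) b - of_nat (Suc a+1) * Phi (Suc a) (Suc b)
     = (of_nat (b+1) * Phi (Suc a) b - of_nat (a+1) * Phi a (Suc b))
       + (of_nat (a+1) * Phi a (Suc (Suc b)) - of_nat (b+2) * Phi (Suc a) (Suc b))"
    unfolding e1 e2 by (simp add: algebra_simps)
  also have "\<dots> = - 1 / 2^(a+b+2) + 1/2^(a+b+3)" using i1 i2 by simp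
  also have "\<dots> = - 1 / 2^(Suc a+b+2)" using p by simp
  finally show ?case .
qed

lemma Phi_col0: "of_nat (a+1) * Phi a 0 = 1 / 2^(a+1)"
proof (induction a)
  case 0
  show ?case unfolding Phi.simps by simp
next
  case (Suc a)
  have r: "of_nat 1 * Phi (Suc a) 0 - of_nat (a+1) * Phi a 1 = - 1 / 2^(a+2)" using Phi_rec[of 0 a] by simp
  have e: "Phi (Suc a) 0 = Phi a 0 - Phi a 1" using PhiS[of a 0] by simp
  have "of_nat (a+2) * Phi (Suc a) 0 = of_nat (a+1) * Phi a 0 + (Phi (Suc a) 0 - of_nat (a+1) * Phi a 1)"
    unfolding e by (simp add: algebra_simps)
  also have "\<dots> = 1/2^(a+1) - 1/2^(a+2)" using Suc r by simp
  also have "\<dots> = 1/2^(Suc a + 1)" by simp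
  finally show ?case by simp
qed


definition flip :: "nat set \<Rightarrow> nat \<Rightarrow> nat set" where
  "flip u i = (if i \<in> u then u - {i} else insert i u)"
definition sd :: "nat set \<Rightarrow> nat set \<Rightarrow> nat set" where
  "sd A B = (A - B) \<union> (B - A)"

lemma flip_V: "u \<in> hyp_vertices n \<Longrightarrow> i < n \<Longrightarrow> flip u i \<in> hyp_vertices n"
  by (auto simp: flip_def hyp_vertices_def)
lemma flip_flip[simp]: "flip (flip u i) i = u"
  by (auto simp: flip_def)
lemma flip_inj: "flip u i = flip u j \<Longrightarrow> i = j"
  by (auto simp: flip_def split: if_splits)
lemma sd_flip1: "sd (flip u i) w = flip (sd u w) i"
  by (auto simp: flip_def sd_def)
lemma sd_flip2: "sd u (flip w i) = flip (sd u w) i"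
  by (auto simp: flip_def sd_def)
lemma sd_comm: "sd u w = sd w u"
  by (auto simp: sd_def)
lemma sd_empty_iff: "sd u w = {} \<longleftrightarrow> u = w"
  by (auto simp: sd_def)
lemma sd_sub: "u \<in> hyp_vertices n \<Longrightarrow> w \<in> hyp_vertices n \<Longrightarrow> sd u w \<subseteq> {..<n}"
  by (auto simp: sd_def hyp_vertices_def)
lemma card_flip: "finite s \<Longrightarrow> card (flip s i) = (if i \<in> s then card s - 1 else Suc (card s))"
  by (auto simp: flip_def)
lemma sd_single_iff: "sd u w = {i} \<longleftrightarrow> w = flip u i"
proof
  assume h: "sd u w = {i}"
  have k: "(x \<in> u \<and> x \<notin> w \<or> x \<in> w \<and> x \<notin> u) \<longleftrightarrow> x = i" for x
  proof -
    have "x \<in> sd u w \<longleftrightarrow> x = i" using h by simp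
    then show ?thesis unfolding sd_def by blast
  qed
  show "w = flip u i"
  proof (rule set_eqI)
    fix x show "x \<in> w \<longleftrightarrow> x \<in> flip u i"
      using k[of x] unfolding flip_def by (cases "i \<in> u") auto
  qed
next
  assume "w = flip u i"
  then show "sd u w = {i}" by (auto simp: sd_def flip_def)
qed

lemma adj_iff:
  assumes "u \<in> hyp_vertices n" "w \<in> hyp_vertices n"
  shows "hyp_adj u w \<longleftrightarrow> (\<exists>i<n. w = flip u i)"
proof
  assume "hyp_adj u w"
  then have "card (sd u w) = 1" by (simp add: hyp_adj_def sd_def)
  then obtain i where i: "sd u w = {i}" by (auto simp: card_1_singleton_iff)
  then have "i < n" using sd_sub[OF assms] by auto
  then show "\<exists>i<n. w = flip u i" using i sd_single_iff by blast
next
  assume "\<exists>i<n. w = flip u i"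
  then obtain i where "w = flip u i" by blast
  then have "sd u w = {i}" using sd_single_iff by blast
  then show "hyp_adj u w" by (simp add: hyp_adj_def sd_def)
qed

lemma nbrs: "u \<in> hyp_vertices n \<Longrightarrow> {w \<in> hyp_vertices n. hyp_adj u w} = flip u ` {..<n}"
  using adj_iff flip_V by auto

lemma inj_flip: "inj_on (flip u) A"
  by (auto intro: inj_onI flip_inj)

lemma lap_int: "u \<in> hyp_vertices n \<Longrightarrow> hyp_laplacian n f u = int n * f u - (\<Sum>i<n. f (flip u i))"
  unfolding hyp_laplacian_def nbrs
  by (simp add: card_image[OF inj_flip] sum.reindex[OF inj_flip])

definition lapQ :: "nat \<Rightarrow> (nat set \<Rightarrow> rat) \<Rightarrow> nat set \<Rightarrow> rat" where
  "lapQ n h u = of_nat n * h u - (\<Sum>i<n. h (flip u i))"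

lemma lap_of_int: "u \<in> hyp_vertices n \<Longrightarrow> of_int (hyp_laplacian n f u) = lapQ n (\<lambda>w. of_int (f w)) u"
  by (simp add: lap_int lapQ_def)

lemma lapQ_cong: "u \<in> hyp_vertices n \<Longrightarrow> (\<And>w. w \<in> hyp_vertices n \<Longrightarrow> h w = h' w) \<Longrightarrow> lapQ n h u = lapQ n h' u"
  unfolding lapQ_def using flip_V by (auto intro!: sum.cong)

lemma sum_flip: "i < n \<Longrightarrow> (\<Sum>u\<in>hyp_vertices n. g (flip u i)) = (\<Sum>u\<in>hyp_vertices n. g u)"
  by (rule sum.reindex_bij_witness[where i="\<lambda>u. flip u i" and j="\<lambda>u. flip u i"]) (auto intro: flip_V)

lemma lap_sym: "(\<Sum>u\<in>hyp_vertices n. lapQ n h1 u * h2 u) = (\<Sum>u\<in>hyp_vertices n. h1 u * lapQ n h2 u)"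
proof -
  let ?V = "hyp_vertices n"
  have s: "(\<Sum>u\<in>?V. h1 (flip u i) * h2 u) = (\<Sum>u\<in>?V. h1 u * h2 (flip u i))" if "i < n" for i
    using sum_flip[OF that, of "\<lambda>u. h1 (flip u i) * h2 u"] by simp
  have "(\<Sum>u\<in>?V. lapQ n h1 u * h2 u) = (\<Sum>u\<in>?V. of_nat n * h1 u * h2 u) - (\<Sum>u\<in>?V. \<Sum>i<n. h1 (flip u i) * h2 u)"
    by (simp add: lapQ_def algebra_simps sum_subtractf sum_distrib_right sum_distrib_left)
  also have "(\<Sum>u\<in>?V. \<Sum>i<n. h1 (flip u i) * h2 u) = (\<Sum>i<n. \<Sum>u\<in>?V. h1 (flip u i) * h2 u)"
    by (rule sum.swap)
  also have "\<dots> = (\<Sum>i<n. \<Sum>u\<in>?V. h1 u * h2 (flip u i))" using s by simp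
  also have "\<dots> = (\<Sum>u\<in>?V. \<Sum>i<n. h1 u * h2 (flip u i))" by (rule sum.swap)
  finally show ?thesis
    by (simp add: lapQ_def algebra_simps sum_subtractf sum_distrib_left)
qed


definition Dl :: "nat \<Rightarrow> nat \<Rightarrow> rat" where "Dl n d = Phi d (n - 1 - d)"
definition gg :: "nat \<Rightarrow> nat \<Rightarrow> rat" where "gg n k = - (\<Sum>j<k. Dl n j)"
definition Gr :: "nat \<Rightarrow> nat set \<Rightarrow> nat set \<Rightarrow> rat" where "Gr n u w = gg n (card (sd u w))"

lemma gg_Suc: "gg n (Suc k) = gg n k - Dl n k"
  by (simp add: gg_def)

lemma Dl_0: "n \<ge> 1 \<Longrightarrow> of_nat n * Dl n 0 = 1 - 1/2^n"
  using Phi0_mult[of "n-1"] by (simp add: Dl_def)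

lemma Dl_rec: assumes "1 \<le> k" "k \<le> n"
  shows "of_nat (n-k) * Dl n k - of_nat k * Dl n (k-1) = - 1/2^n"
proof (cases "k = n")
  case True
  have "of_nat (n-1+1) * Phi (n-1) 0 = 1 / 2^(n-1+1)" by (rule Phi_col0)
  then show ?thesis using True assms by (simp add: Dl_def)
next
  case False
  have e: "(n-1-k)+1 = n-k" "(k-1)+1 = k" "Suc (k-1) = k" "Suc (n-1-k) = n - 1 - (k-1)"
     "(k-1)+(n-1-k)+2 = n" using assms False by auto
  have "of_nat (n-k) * Phi k (n-1-k) - of_nat k * Phi (k-1) (n - 1 - (k-1)) = - 1/2^n"
    using Phi_rec[of "n-1-k" "k-1"] by (simp only: e)
  then show ?thesis by (simp add: Dl_def)
qed

lemma card_sd_le: "u \<in> hyp_vertices n \<Longrightarrow> w \<in> hyp_vertices n \<Longrightarrow> card (sd u w) \<le> n"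
  using card_mono[OF _ sd_sub] by fastforce

lemma lap_Gr:
  assumes n: "n \<ge> 1" and u: "u \<in> hyp_vertices n" and w: "w \<in> hyp_vertices n"
  shows "lapQ n (Gr n u) w = (if w = u then 1 else 0) - 1/2^n"
proof -
  define s where "s = sd u w"
  define k where "k = card s"
  have ssub: "s \<subseteq> {..<n}" using sd_sub[OF u w] s_def by simp
  have fin: "finite s" using ssub finite_subset by blast
  have kn: "k \<le> n" using card_sd_le[OF u w] s_def k_def by simp
  have "(\<Sum>i<n. Gr n u (flip w i)) = (\<Sum>i<n. if i \<in> s then gg n (k-1) else gg n (Suc k))"
    by (rule sum.cong) (auto simp: Gr_def sd_flip2 card_flip[OF fin] s_def[symmetric] k_def)
  also have "\<dots> = (\<Sum>i\<in>{..<n} \<inter> {i. i \<in> s}. gg n (k-1)) + (\<Sum>i\<in>{..<n} \<inter> - {i. i \<in> s}. gg n (Suc k))"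
    by (rule sum.If_cases) simp
  also have "{..<n} \<inter> {i. i \<in> s} = s" using ssub by auto
  also have "{..<n} \<inter> - {i. i \<in> s} = {..<n} - s" by auto
  finally have S0: "(\<Sum>i<n. Gr n u (flip w i)) = (\<Sum>i\<in>s. gg n (k-1)) + (\<Sum>i\<in>{..<n} - s. gg n (Suc k))" .
  have "card ({..<n} - s) = n - k" using card_Diff_subset[OF fin ssub] k_def by simp
  then have S: "(\<Sum>i<n. Gr n u (flip w i)) = of_nat k * gg n (k-1) + of_nat (n-k) * gg n (Suc k)"
    using k_def S0 by simp
  have L: "lapQ n (Gr n u) w = of_nat n * gg n k - (of_nat k * gg n (k-1) + of_nat (n-k) * gg n (Suc k))"
    unfolding lapQ_def S by (simp add: Gr_def s_def k_def)
  show ?thesis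
  proof (cases "k = 0")
    case True
    then have "w = u" using fin k_def s_def sd_empty_iff by auto
    then show ?thesis using L True Dl_0[OF n] by (simp add: gg_Suc gg_def)
  next
    case False
    then have "s \<noteq> {}" using k_def by auto
    then have "w \<noteq> u" using s_def sd_empty_iff by metis
    have g1: "gg n k = gg n (k-1) - Dl n (k-1)" using gg_Suc[of n "k-1"] False by simp
    have "of_nat n * gg n k - (of_nat k * gg n (k-1) + of_nat (n-k) * gg n (Suc k))
        = of_nat (n-k) * Dl n k - of_nat k * Dl n (k-1)"
      using kn unfolding gg_Suc g1 by (simp add: algebra_simps of_nat_diff)
    also have "\<dots> = - 1/2^n" using Dl_rec[of k n] False kn by simp
    finally show ?thesis using L \<open>w \<noteq> u\<close> by simp
  qed
qed


definition Rcond :: "nat \<Rightarrow> rat \<Rightarrow> bool" where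
  "Rcond n c \<longleftrightarrow> (\<forall>k. k+2 \<le> n \<longrightarrow> c * Phi 0 k \<in> \<int>) \<and> c * (2 * Phi 0 (n-1)) \<in> \<int>"
definition Scond :: "nat \<Rightarrow> rat \<Rightarrow> bool" where
  "Scond n c \<longleftrightarrow> (\<forall>d<n. c * (2 * Dl n d) \<in> \<int>) \<and> (\<forall>d. d+2 \<le> n \<longrightarrow> c * (Dl n d - Dl n (d+1)) \<in> \<int>)"

lemma R_L1: "Rcond n c \<Longrightarrow> a+b+2 \<le> n \<Longrightarrow> c * Phi a b \<in> \<int>"
proof (induction a arbitrary: b)
  case 0 then show ?case by (simp add: Rcond_def)
next
  case (Suc a)
  have "c * Phi (Suc a) b = c * Phi a b - c * Phi a (Suc b)" by (simp add: PhiS algebra_simps)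
  then show ?case using Suc.IH[of b] Suc.IH[of "Suc b"] Suc.prems by auto
qed

lemma R_L2: "Rcond n c \<Longrightarrow> a+b+1 = n \<Longrightarrow> c * (2 * Phi a b) \<in> \<int>"
proof (induction a arbitrary: b)
  case 0 then show ?case by (auto simp: Rcond_def)
next
  case (Suc a)
  have "c * (2 * Phi (Suc a) b) = 2 * (c * Phi a b) - c * (2 * Phi a (Suc b))" by (simp add: PhiS algebra_simps)
  moreover have "c * Phi a b \<in> \<int>" using R_L1[OF Suc.prems(1)] Suc.prems by auto
  ultimately show ?case using Suc.IH[of "Suc b"] Suc.prems by auto
qed

lemma R_to_S: assumes "Rcond n c" shows "Scond n c"
  unfolding Scond_def
proof (intro conjI allI impI)
  fix d assume "d < n"
  then show "c * (2 * Dl n d) \<in> \<int>" using R_L2[OF assms, of d "n-1-d"] by (simp add: Dl_def)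
next
  fix d assume d: "d + 2 \<le> n"
  have e: "Dl n (d+1) = Phi d (n-2-d) - Phi d (n-1-d)"
  proof -
    have "Suc (n-2-d) = n-1-d" "n - 1 - (d+1) = n-2-d" using d by auto
    then show ?thesis by (simp add: Dl_def PhiS)
  qed
  have "c * (Dl n d - Dl n (d+1)) = c * (2 * Phi d (n-1-d)) - c * Phi d (n-2-d)"
    unfolding e by (simp add: Dl_def algebra_simps)
  moreover have "c * (2 * Phi d (n-1-d)) \<in> \<int>" using R_L2[OF assms, of d "n-1-d"] d by simp
  moreover have "c * Phi d (n-2-d) \<in> \<int>" using R_L1[OF assms, of d "n-2-d"] d by simp
  ultimately show "c * (Dl n d - Dl n (d+1)) \<in> \<int>" by auto
qed

lemma S_L4: assumes "Scond n c" "a+b+2 = n" shows "c * Phi a b \<in> \<int>"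
proof -
  have "n - 1 - a = Suc b" "n - 1 - (a+1) = b" using assms(2) by auto
  then have e1: "Dl n a = Phi a (Suc b)" and e2: "Dl n (a+1) = Phi (Suc a) b" by (simp_all add: Dl_def)
  have "c * Phi a b = c * (2 * Dl n a) - c * (Dl n a - Dl n (a+1))"
    unfolding e1 e2 by (simp add: PhiS algebra_simps)
  moreover have "c * (2 * Dl n a) \<in> \<int>" "c * (Dl n a - Dl n (a+1)) \<in> \<int>"
    using assms unfolding Scond_def by auto
  ultimately show ?thesis by auto
qed

lemma S_L5: assumes "Scond n c" shows "a+b+2+j = n \<Longrightarrow> c * Phi a b \<in> \<int>"
proof (induction j arbitrary: a b)
  case 0 then show ?case using S_L4[OF assms] by simp
next
  case (Suc j)
  have "c * Phi a b = c * Phi (Suc a) b + c * Phi a (Suc b)" by (simp add: PhiS algebra_simps)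
  then show ?case using Suc.IH[of "Suc a" b] Suc.IH[of a "Suc b"] Suc.prems by auto
qed

lemma S_to_R: assumes "Scond n c" "n \<ge> 1" shows "Rcond n c"
  unfolding Rcond_def
proof (intro conjI allI impI)
  fix k assume "k + 2 \<le> n"
  then show "c * Phi 0 k \<in> \<int>" using S_L5[OF assms(1), of 0 k "n - (k+2)"] by simp
next
  show "c * (2 * Phi 0 (n-1)) \<in> \<int>" using assms unfolding Scond_def by (auto simp: Dl_def)
qed


definition Hf :: "nat \<Rightarrow> nat set \<Rightarrow> nat set \<Rightarrow> nat set \<Rightarrow> nat set \<Rightarrow> rat" where
  "Hf n u v w w' = Gr n u w - Gr n v w - Gr n u w' + Gr n v w'"
definition HZ :: "nat \<Rightarrow> rat \<Rightarrow> bool" where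
  "HZ n c \<longleftrightarrow> (\<forall>u\<in>hyp_vertices n. \<forall>v\<in>hyp_vertices n. \<forall>w\<in>hyp_vertices n. \<forall>w'\<in>hyp_vertices n.
      c * Hf n u v w w' \<in> \<int>)"

lemma sd_empty_left: "sd {} X = X" by (auto simp: sd_def)
lemma sd_single_notin: "m \<notin> X \<Longrightarrow> sd {m} X = insert m X" by (auto simp: sd_def)
lemma sd_single_in: "m \<notin> X \<Longrightarrow> sd {m} (insert m X) = X" by (auto simp: sd_def)

lemma HZ_to_S: assumes "HZ n c" "n \<ge> 1" shows "Scond n c"
  unfolding Scond_def
proof (intro conjI allI impI)
  fix d assume d: "d < n"
  have V: "{} \<in> hyp_vertices n" "{n-1} \<in> hyp_vertices n" "{..<d} \<in> hyp_vertices n"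
      "insert (n-1) {..<d} \<in> hyp_vertices n" using d assms(2) by (auto simp: hyp_vertices_def)
  have nd: "n - 1 \<notin> {..<d}" using d by auto
  have "Hf n {} {n-1} {..<d} (insert (n-1) {..<d}) = 2 * Dl n d"
    unfolding Hf_def Gr_def sd_empty_left sd_single_notin[OF nd] sd_single_in[OF nd]
    using nd by (simp add: gg_Suc)
  then show "c * (2 * Dl n d) \<in> \<int>" using assms(1) V unfolding HZ_def by metis
next
  fix d assume d: "d + 2 \<le> n"
  have V: "{} \<in> hyp_vertices n" "{n-1} \<in> hyp_vertices n" "{..<d} \<in> hyp_vertices n"
      "insert (n-2) {..<d} \<in> hyp_vertices n" using d assms(2) by (auto simp: hyp_vertices_def)
  have nd: "n - 1 \<notin> {..<d}" "n - 1 \<notin> insert (n-2) {..<d}" "n - 2 \<notin> {..<d}" using d by auto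
  have "Hf n {} {n-1} {..<d} (insert (n-2) {..<d}) = Dl n d - Dl n (d+1)"
    unfolding Hf_def Gr_def sd_empty_left sd_single_notin[OF nd(1)] sd_single_notin[OF nd(2)]
    using nd by (simp add: gg_Suc)
  then show "c * (Dl n d - Dl n (d+1)) \<in> \<int>" using assms(1) V unfolding HZ_def by metis
qed

lemma path_lemma:
  assumes step: "\<And>a j. a \<in> hyp_vertices n \<Longrightarrow> j < n \<Longrightarrow> P a (flip a j)"
    and refl: "\<And>a. P a a" and trans: "\<And>a b c. P a b \<Longrightarrow> P b c \<Longrightarrow> P a c"
  shows "a \<in> hyp_vertices n \<Longrightarrow> b \<in> hyp_vertices n \<Longrightarrow> P a b"
proof (induction "card (sd a b)" arbitrary: a)
  case 0
  have "finite (sd a b)" using sd_sub[OF 0(2,3)] finite_subset by blast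
  then have "sd a b = {}" using 0(1) by simp
  then show ?case using refl sd_empty_iff by metis
next
  case (Suc m)
  have fin: "finite (sd a b)" using sd_sub[OF Suc(3,4)] finite_subset by blast
  then obtain j where j: "j \<in> sd a b" using Suc(2) by (metis card.empty nat.distinct(1) ex_in_conv)
  have jn: "j < n" using j sd_sub[OF Suc(3,4)] by auto
  have a': "flip a j \<in> hyp_vertices n" using flip_V[OF Suc(3) jn] .
  have "card (sd (flip a j) b) = m" using Suc(2) j fin by (simp add: sd_flip1 card_flip)
  then have "P (flip a j) b" using Suc(1) a' Suc(4) by metis
  then show ?case using trans step[OF Suc(3) jn] by blast
qed




lemma Ints_neg_iff: "c * (- x) \<in> (\<int>::rat set) \<longleftrightarrow> c * x \<in> \<int>"
  by simp

lemma flip_comm: "flip (flip s i) j = flip (flip s j) i"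
  by (auto simp: flip_def)

lemma adj_case:
  assumes S: "Scond n c" and u: "u \<in> hyp_vertices n" and w: "w \<in> hyp_vertices n"
    and i: "i < n" and j: "j < n"
  shows "c * Hf n u (flip u i) w (flip w j) \<in> \<int>"
proof -
  define s where "s = sd u w"
  define k where "k = card s"
  have ssub: "s \<subseteq> {..<n}" using sd_sub[OF u w] s_def by simp
  have fin: "finite s" using ssub finite_subset by blast
  have kn: "k \<le> n" using card_sd_le[OF u w] s_def k_def by simp
  have H: "Hf n u (flip u i) w (flip w j) = gg n k - gg n (card (flip s i)) - gg n (card (flip s j))
       + gg n (card (flip (flip s i) j))"
    unfolding Hf_def Gr_def sd_flip1 sd_flip2 s_def k_def by simp
  have S1: "c * (2 * Dl n d) \<in> \<int>" if "d < n" for d using S that unfolding Scond_def by auto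
  have S2: "c * (Dl n d - Dl n (d+1)) \<in> \<int>" if "d + 2 \<le> n" for d using S that unfolding Scond_def by auto
  have notin_bound: "k < n" if "x \<notin> s" "x < n" for x
  proof -
    have "insert x s \<subseteq> {..<n}" using ssub that by auto
    then have "card (insert x s) \<le> card {..<n}" by (rule card_mono[rotated]) simp
    then have "card (insert x s) \<le> n" by simp
    then show ?thesis using that fin k_def by simp
  qed
  show ?thesis
  proof (cases "i = j")
    case True
    show ?thesis
    proof (cases "i \<in> s")
      case True
      then have "k \<noteq> 0" using fin k_def by auto
      then obtain m where m: "k = Suc m" using not0_implies_Suc by blast
      have "Hf n u (flip u i) w (flip w j) = - (2 * Dl n m)"
        unfolding H using \<open>i = j\<close> True fin m k_def by (simp add: card_flip gg_Suc)
      then show ?thesis using S1[of m] m kn Ints_neg_iff by simp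
    next
      case False
      have "Hf n u (flip u i) w (flip w j) = 2 * Dl n k"
        unfolding H using \<open>i = j\<close> False fin k_def by (simp add: card_flip gg_Suc)
      then show ?thesis using S1 notin_bound[OF False i] by simp
    qed
  next
    case ij: False
    have mem: "j \<in> flip s i \<longleftrightarrow> j \<in> s" using ij by (auto simp: flip_def)
    have fin2: "finite (flip s i)" using fin by (simp add: flip_def)
    have H2: "card (flip (flip s i) j) = (if j \<in> s then card (flip s i) - 1 else Suc (card (flip s i)))"
      using card_flip[OF fin2, of j] mem by simp
    consider "i \<notin> s" "j \<notin> s" | "i \<in> s" "j \<notin> s" | "i \<notin> s" "j \<in> s" | "i \<in> s" "j \<in> s" by blast
    then show ?thesis
    proof cases
      case 1
      have "insert i (insert j s) \<subseteq> {..<n}" using ssub i j by auto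
      then have "card (insert i (insert j s)) \<le> card {..<n}" by (rule card_mono[rotated]) simp
      then have "card (insert i (insert j s)) \<le> n" by simp
      then have kb: "k + 2 \<le> n" using 1 ij fin k_def by simp
      have "Hf n u (flip u i) w (flip w j) = Dl n k - Dl n (k+1)"
        unfolding H using 1 fin k_def H2 by (simp add: card_flip gg_Suc)
      then show ?thesis using S2[OF kb] by simp
    next
      case 2
      then have "k \<noteq> 0" using fin k_def by auto
      then obtain m where m: "k = Suc m" using not0_implies_Suc by blast
      have kb: "m + 2 \<le> n" using notin_bound[OF 2(2) j] m by simp
      have hh: "Hf n u (flip u i) w (flip w j) = - (Dl n m - Dl n (m+1))"
        proof -
        have cs: "card s = Suc m" using m k_def by simp
        show ?thesis unfolding H using 2 fin H2 cs m by (simp add: card_flip gg_Suc)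
      qed
      have e: "c * Hf n u (flip u i) w (flip w j) = - (c * (Dl n m - Dl n (m+1)))" by (simp only: hh mult_minus_right)
      show ?thesis unfolding e using S2[OF kb] by (rule Ints_minus)
    next
      case 3
      then have "k \<noteq> 0" using fin k_def by auto
      then obtain m where m: "k = Suc m" using not0_implies_Suc by blast
      have kb: "m + 2 \<le> n" using notin_bound[OF 3(1) i] m by simp
      have hh: "Hf n u (flip u i) w (flip w j) = - (Dl n m - Dl n (m+1))"
        proof -
        have cs: "card s = Suc m" using m k_def by simp
        show ?thesis unfolding H using 3 fin H2 cs m by (simp add: card_flip gg_Suc)
      qed
      have e: "c * Hf n u (flip u i) w (flip w j) = - (c * (Dl n m - Dl n (m+1)))" by (simp only: hh mult_minus_right)
      show ?thesis unfolding e using S2[OF kb] by (rule Ints_minus)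
    next
      case 4
      have "{i, j} \<subseteq> s" using 4 by auto
      then have "card {i, j} \<le> k" using card_mono[OF fin] k_def by blast
      then have "k \<ge> 2" using ij by simp
      define m where "m = k - 2"
      have m: "k = Suc (Suc m)" using \<open>k \<ge> 2\<close> m_def by arith
      have kb: "m + 2 \<le> n" using m kn by simp
      have c1: "card (flip s i) = Suc m" using 4 fin m k_def by (simp add: card_flip)
      have "Hf n u (flip u i) w (flip w j) = Dl n m - Dl n (m+1)"
      proof -
        have cs: "card s = Suc (Suc m)" using m k_def by simp
        show ?thesis unfolding H using 4 fin H2 cs m c1 by (simp add: card_flip gg_Suc)
      qed
      then show ?thesis using S2[OF kb] by simp
    qed
  qed
qed

lemma S_to_HZ: assumes S: "Scond n c" shows "HZ n c"
proof -
  have step1: "c * Hf n u (flip u i) w w' \<in> \<int>"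
    if u: "u \<in> hyp_vertices n" and i: "i < n" and w: "w \<in> hyp_vertices n" and w': "w' \<in> hyp_vertices n" for u i w w'
  proof -
    let ?P = "\<lambda>a b. c * Hf n u (flip u i) a b \<in> \<int>"
    show ?thesis
    proof (rule path_lemma[of n ?P, OF _ _ _ w w'])
      show "\<And>a j. a \<in> hyp_vertices n \<Longrightarrow> j < n \<Longrightarrow> ?P a (flip a j)" using adj_case[OF S u _ i] by blast
      show "\<And>a. ?P a a" by (simp add: Hf_def)
      show "\<And>a b d. ?P a b \<Longrightarrow> ?P b d \<Longrightarrow> ?P a d"
      proof -
        fix a b d assume "?P a b" "?P b d"
        moreover have "c * Hf n u (flip u i) a d = c * Hf n u (flip u i) a b + c * Hf n u (flip u i) b d"
          by (simp add: Hf_def algebra_simps)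
        ultimately show "?P a d" by simp
      qed
    qed
  qed
  let ?Q = "\<lambda>a b. \<forall>w\<in>hyp_vertices n. \<forall>w'\<in>hyp_vertices n. c * Hf n a b w w' \<in> \<int>"
  have "?Q u v" if "u \<in> hyp_vertices n" "v \<in> hyp_vertices n" for u v
  proof (rule path_lemma[of n ?Q, OF _ _ _ that])
    show "\<And>a j. a \<in> hyp_vertices n \<Longrightarrow> j < n \<Longrightarrow> ?Q a (flip a j)" using step1 by blast
    show "\<And>a. ?Q a a" by (simp add: Hf_def)
    show "\<And>a b d. ?Q a b \<Longrightarrow> ?Q b d \<Longrightarrow> ?Q a d"
    proof (intro ballI)
      fix a b d w w' assume q: "?Q a b" "?Q b d" and ww: "w \<in> hyp_vertices n" "w' \<in> hyp_vertices n"
      have "c * Hf n a d w w' = c * Hf n a b w w' + c * Hf n b d w w'"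
        by (simp add: Hf_def algebra_simps)
      then show "c * Hf n a d w w' \<in> \<int>" using q ww by simp
    qed
  qed
  then show ?thesis unfolding HZ_def by blast
qed



lemma lapQ_const: "lapQ n (\<lambda>_. K) u = 0"
  by (simp add: lapQ_def)

lemma lapQ_sum0: "(\<Sum>u\<in>hyp_vertices n. lapQ n h u) = 0"
  using lap_sym[of n h "\<lambda>_. 1"] by (simp add: lapQ_const)

lemma lapQ_lin: "lapQ n (\<lambda>w. (\<Sum>t\<in>A. a t * h t w) - K) u = (\<Sum>t\<in>A. a t * lapQ n (h t) u)"
proof -
  have "lapQ n (\<lambda>w. (\<Sum>t\<in>A. a t * h t w) - K) u
      = of_nat n * (\<Sum>t\<in>A. a t * h t u) - (\<Sum>i<n. \<Sum>t\<in>A. a t * h t (flip u i))"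
    by (simp add: lapQ_def sum_subtractf algebra_simps)
  also have "(\<Sum>i<n. \<Sum>t\<in>A. a t * h t (flip u i)) = (\<Sum>t\<in>A. \<Sum>i<n. a t * h t (flip u i))"
    by (rule sum.swap)
  finally show ?thesis
    by (simp add: lapQ_def sum_subtractf algebra_simps sum_distrib_left)
qed

lemma lapQ_diff: "lapQ n (\<lambda>w. h1 w - h2 w) u = lapQ n h1 u - lapQ n h2 u"
  by (simp add: lapQ_def sum_subtractf algebra_simps)

lemma torsion_sum0:
  assumes "coker_torsion n x" shows "(\<Sum>u\<in>hyp_vertices n. x u) = 0"
proof -
  obtain m :: nat and f where m: "m > 0" and f: "\<forall>u\<in>hyp_vertices n. int m * x u = hyp_laplacian n f u"
    using assms unfolding coker_torsion_def in_lap_image_def by blast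
  have "(\<Sum>u\<in>hyp_vertices n. (of_int (int m * x u) :: rat)) = (\<Sum>u\<in>hyp_vertices n. lapQ n (\<lambda>w. of_int (f w)) u)"
    using f lap_of_int by (auto intro!: sum.cong)
  also have "\<dots> = 0" by (rule lapQ_sum0)
  finally have "(of_int (int m * (\<Sum>u\<in>hyp_vertices n. x u)) :: rat) = 0"
    by (simp add: sum_distrib_left)
  then have "int m * (\<Sum>u\<in>hyp_vertices n. x u) = 0" by (metis of_int_eq_0_iff)
  then show ?thesis using m by simp
qed

lemma finV: "finite (hyp_vertices n)" by (simp add: hyp_vertices_def)

lemma Gr_sym: "Gr n u w = Gr n w u"
  by (simp add: Gr_def sd_comm)

lemma HZ_image:
  assumes n: "n \<ge> 1" and HZ: "HZ n (of_nat C)" and s0: "(\<Sum>u\<in>hyp_vertices n. x u) = 0"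
  shows "in_lap_image n (\<lambda>u. int C * x u)"
proof -
  let ?V = "hyp_vertices n"
  have e: "{} \<in> ?V" by (simp add: hyp_vertices_def)
  define F where "F w = of_nat C * (\<Sum>t\<in>?V. of_int (x t) * Hf n t {} w {})" for w
  have FZ: "F w \<in> \<int>" if "w \<in> ?V" for w
  proof -
    have "F w = (\<Sum>t\<in>?V. of_int (x t) * (of_nat C * Hf n t {} w {}))"
      unfolding F_def by (simp add: sum_distrib_left algebra_simps)
    moreover have "of_int (x t) * (of_nat C * Hf n t {} w {}) \<in> \<int>" if "t \<in> ?V" for t
      using HZ that e \<open>w \<in> ?V\<close> unfolding HZ_def by (intro Ints_mult[OF Ints_of_int]) auto
    ultimately show ?thesis by (auto intro: Ints_sum)
  qed
  have s0q: "(\<Sum>t\<in>?V. (of_int (x t)::rat)) = 0" using s0 by (metis of_int_0 of_int_sum)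
  define K where "K = of_nat C * (\<Sum>t\<in>?V. of_int (x t) * Gr n t {})"
  have a0: "(\<Sum>t\<in>?V. of_int (x t) * Gr n {} w) = 0" for w
    using s0q by (simp add: sum_distrib_right[symmetric])
  have Fe: "F w = (\<Sum>t\<in>?V. (of_nat C * of_int (x t)) * Gr n t w) - K" for w
    unfolding F_def Hf_def K_def
    by (simp add: sum_subtractf sum.distrib a0 algebra_simps sum_distrib_left)
  define f where "f w = \<lfloor>F w\<rfloor>" for w
  have fF: "of_int (f w) = F w" if "w \<in> ?V" for w
    using FZ[OF that] unfolding f_def by (metis floor_of_int Ints_cases)
  have "int C * x u = hyp_laplacian n f u" if u: "u \<in> ?V" for u
  proof -
    have "of_int (hyp_laplacian n f u) = lapQ n (\<lambda>w. of_int (f w)) u" by (rule lap_of_int[OF u])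
    also have "\<dots> = lapQ n F u" using fF by (intro lapQ_cong[OF u]) auto
    also have "\<dots> = (\<Sum>t\<in>?V. (of_nat C * of_int (x t)) * lapQ n (Gr n t) u)"
      unfolding Fe by (rule lapQ_lin)
    also have "\<dots> = (\<Sum>t\<in>?V. (of_nat C * of_int (x t)) * ((if u = t then 1 else 0) - 1/2^n))"
      by (intro sum.cong refl) (simp add: lap_Gr[OF n _ u])
    also have "\<dots> = (\<Sum>t\<in>?V. (if u = t then of_nat C * of_int (x t) else 0) - (of_nat C * of_int (x t)) / 2^n)"
      by (intro sum.cong refl) (auto simp: algebra_simps)
    also have "\<dots> = (\<Sum>t\<in>?V. if u = t then of_nat C * of_int (x t) else 0)
         - (\<Sum>t\<in>?V. (of_nat C * of_int (x t)) / 2^n)"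
      by (rule sum_subtractf)
    also have "(\<Sum>t\<in>?V. (of_nat C * of_int (x t)) / 2^n) = (of_nat C / 2^n) * (\<Sum>t\<in>?V. (of_int (x t)::rat))"
      by (simp add: sum_distrib_left sum_divide_distrib)
    also have "(\<Sum>t\<in>?V. if u = t then of_nat C * of_int (x t) else 0) = (of_nat C * of_int (x u) :: rat)"
      using sum.delta'[OF finV, of u "\<lambda>t. of_nat C * (of_int (x t)::rat)"] u by simp
    also have "of_nat C * of_int (x u) - of_nat C / 2 ^ n * (\<Sum>t\<in>?V. (of_int (x t)::rat)) = of_nat C * of_int (x u)"
      using s0q by simp
    finally show ?thesis by (metis of_int_eq_iff of_int_mult of_int_of_nat_eq)
  qed
  then show ?thesis unfolding in_lap_image_def by blast
qed


lemma good_to_HZ: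
  assumes n: "n \<ge> 1"
    and good: "\<forall>x. coker_torsion n x \<longrightarrow> in_lap_image n (\<lambda>u. int C * x u)"
    and tors: "\<And>u v. u \<in> hyp_vertices n \<Longrightarrow> v \<in> hyp_vertices n \<Longrightarrow>
       coker_torsion n (\<lambda>t. (if t = u then 1 else 0) - (if t = v then 1 else 0))"
  shows "HZ n (of_nat C)"
  unfolding HZ_def
proof (intro ballI)
  let ?V = "hyp_vertices n"
  fix u v w w' assume uv: "u \<in> ?V" "v \<in> ?V" "w \<in> ?V" "w' \<in> ?V"
  define x where "x t = (if t = u then 1 else 0) - (if t = v then (1::int) else 0)" for t
  have "coker_torsion n x" unfolding x_def using tors[OF uv(1,2)] .
  then obtain f where f: "\<forall>t\<in>?V. int C * x t = hyp_laplacian n f t"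
    using good unfolding in_lap_image_def by blast
  define F where "F t = (of_int (f t) :: rat)" for t
  define h where "h t = Gr n w t - Gr n w' t" for t
  have LF: "lapQ n F t = of_nat C * of_int (x t)" if "t \<in> ?V" for t
  proof -
    have "lapQ n F t = of_int (hyp_laplacian n f t)" unfolding F_def by (rule lap_of_int[OF that, symmetric])
    also have "\<dots> = of_int (int C * x t)" using f that by simp
    finally show ?thesis by simp
  qed
  have Lh: "lapQ n h t = (if t = w then 1 else 0) - (if t = w' then 1 else 0)" if "t \<in> ?V" for t
    unfolding h_def lapQ_diff using lap_Gr[OF n uv(3) that] lap_Gr[OF n uv(4) that] by simp
  have "(\<Sum>t\<in>?V. lapQ n F t * h t) = (\<Sum>t\<in>?V. F t * lapQ n h t)" by (rule lap_sym)
  also have "\<dots> = (\<Sum>t\<in>?V. (if t = w then F t else 0) - (if t = w' then F t else 0))"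
    using Lh by (intro sum.cong refl) auto
  also have "\<dots> = F w - F w'" using uv finV by (simp add: sum_subtractf)
  finally have A: "(\<Sum>t\<in>?V. lapQ n F t * h t) = F w - F w'" .
  have "(\<Sum>t\<in>?V. lapQ n F t * h t) = (\<Sum>t\<in>?V. of_nat C * ((if t = u then h t else 0) - (if t = v then h t else 0)))"
    using LF by (intro sum.cong refl) (auto simp: x_def)
  also have "\<dots> = of_nat C * (h u - h v)" using uv finV by (simp add: sum_subtractf sum_distrib_left[symmetric])
  finally have B: "of_nat C * (h u - h v) = F w - F w'" using A by simp
  have "Hf n u v w w' = h u - h v" unfolding Hf_def h_def using Gr_sym by (simp add: Gr_sym[of n w] Gr_sym[of n w'])
  then have "of_nat C * Hf n u v w w' = of_int (f w - f w')" using B by (simp add: F_def)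
  then show "of_nat C * Hf n u v w w' \<in> \<int>" by simp
qed



definition Tsum :: "nat \<Rightarrow> nat \<Rightarrow> rat" where
  "Tsum m b = (\<Sum>i=0..m. of_nat (m choose i) / (2 * of_nat (b+i)))"
definition Qv :: "nat \<Rightarrow> nat \<Rightarrow> rat" where
  "Qv m b = (1/2^m) * Tsum m b"

lemma Tsum_pascal: "Tsum (Suc m) b = Tsum m b + Tsum m (Suc b)"
proof -
  define t where "t i = 1 / (2 * (of_nat (b+i)::rat))" for i
  have T: "Tsum k b' = (\<Sum>i\<le>k. of_nat (k choose i) * (1 / (2 * of_nat (b'+i))))" for k b'
    unfolding Tsum_def by (simp add: atLeast0AtMost)
  have t1: "1 / (2 * (of_nat (Suc b + i)::rat)) = t (Suc i)" for i unfolding t_def by simp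
  have A: "Tsum (Suc m) b = t 0 + (\<Sum>i\<le>m. of_nat (Suc m choose Suc i) * t (Suc i))"
    unfolding T t_def[symmetric] by (subst sum.atMost_Suc_shift) simp
  have B: "(\<Sum>i\<le>m. of_nat (Suc m choose Suc i) * t (Suc i))
     = (\<Sum>i\<le>m. of_nat (m choose i) * t (Suc i)) + (\<Sum>i\<le>m. of_nat (m choose Suc i) * t (Suc i))"
    by (simp add: sum.distrib algebra_simps)
  have C: "t 0 + (\<Sum>i\<le>m. of_nat (m choose Suc i) * t (Suc i)) = (\<Sum>i\<le>Suc m. of_nat (m choose i) * t i)"
    by (subst sum.atMost_Suc_shift) simp
  have D: "(\<Sum>i\<le>Suc m. of_nat (m choose i) * t i) = Tsum m b"
    unfolding T t_def by simp
  have E: "(\<Sum>i\<le>m. of_nat (m choose i) * t (Suc i)) = Tsum m (Suc b)"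
    unfolding T t_def by simp
  show ?thesis using A B C D E by simp
qed

lemma Qv_pascal: "2 * Qv (Suc m) b = Qv m b + Qv m (Suc b)"
  unfolding Qv_def Tsum_pascal by (simp add: field_simps)

lemma Qv_1: "Qv m 1 = Phi 0 m"
proof -
  have e: "of_nat (m choose i) / (2 * of_nat (1+i)) = (of_nat (Suc m choose Suc i) / (2 * of_nat (Suc m)) :: rat)" for i
  proof -
    have "Suc m * (m choose i) = (Suc m choose Suc i) * Suc i" by (rule Suc_times_binomial_eq)
    then have "(of_nat (Suc m) * of_nat (m choose i) :: rat) = of_nat (Suc m choose Suc i) * of_nat (Suc i)"
      by (metis of_nat_mult)
    then show ?thesis by (simp add: field_simps)
  qed
  have s: "(\<Sum>i\<le>m. Suc m choose Suc i) = 2^(Suc m) - 1"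
  proof -
    have "(\<Sum>i\<le>Suc m. Suc m choose i) = 2^(Suc m)" by (rule choose_row_sum)
    moreover have "(\<Sum>i\<le>Suc m. Suc m choose i) = (Suc m choose 0) + (\<Sum>i\<le>m. Suc m choose Suc i)"
      by (rule sum.atMost_Suc_shift)
    ultimately have "1 + (\<Sum>i\<le>m. Suc m choose Suc i) = 2^(Suc m)" by (simp only: binomial_n_0)
    then show ?thesis by (simp del: binomial_Suc_Suc)
  qed
  have s': "(\<Sum>i\<le>m. (of_nat (Suc m choose Suc i) :: rat)) = 2^(Suc m) - 1"
  proof -
    have "(\<Sum>i\<le>m. (of_nat (Suc m choose Suc i) :: rat)) = of_nat (\<Sum>i\<le>m. Suc m choose Suc i)" by (rule of_nat_sum[symmetric])
    also have "\<dots> = of_nat (2^(Suc m) - 1)" using s by simp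
    also have "\<dots> = 2^(Suc m) - 1" by (simp add: of_nat_diff)
    finally show ?thesis .
  qed
  have "Tsum m 1 = (\<Sum>i\<le>m. of_nat (Suc m choose Suc i) / (2 * of_nat (Suc m)))"
    unfolding Tsum_def atLeast0AtMost using e by simp
  also have "\<dots> = (\<Sum>i\<le>m. (of_nat (Suc m choose Suc i) :: rat)) / (2 * of_nat (Suc m))"
    by (rule sum_divide_distrib[symmetric])
  also have "\<dots> = (2^(Suc m) - 1) / (2 * of_nat (Suc m))" by (simp only: s')
  finally have T1: "Tsum m 1 = (2^(Suc m) - 1) / (2 * of_nat (Suc m))" .
  have g: "\<And>a c::rat. a \<noteq> 0 \<Longrightarrow> c \<noteq> 0 \<Longrightarrow> (1/a) * ((2*a - 1) / (2*c)) = (2*a - 1)/(c*(2*a))"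
    by (simp add: field_simps)
  have "Qv m 1 = (1/2^m) * ((2*2^m - 1) / (2 * of_nat (m+1)))"
    unfolding Qv_def T1 by simp
  also have "\<dots> = (2*2^m - 1) / (of_nat (m+1) * (2*2^m))" by (rule g) simp_all
  also have "\<dots> = Phi 0 m" by (simp add: Phi.simps)
  finally show ?thesis .
qed

lemma Qv_1': "Qv m (Suc 0) = Phi 0 m" using Qv_1 by simp

definition Qcond :: "nat \<Rightarrow> rat \<Rightarrow> bool" where
  "Qcond n c \<longleftrightarrow> (\<forall>m b. m+2 \<le> n \<and> 1 \<le> b \<and> m+b \<le> n \<longrightarrow> c * Qv m b \<in> \<int>)"

lemma exp_cond_iff: "exp_condition n C \<longleftrightarrow> C > 0 \<and> Qcond n (of_nat C)"
proof -
  have t: "(of_nat C / 2 ^ m) * (\<Sum>i=0..m. of_nat (m choose i) / (2 * of_nat (b + i))) = (of_nat C * Qv m b :: rat)" for m b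
    unfolding Qv_def Tsum_def by simp
  show ?thesis
  proof
    assume h: "exp_condition n C"
    have "of_nat C * Qv m b \<in> \<int>" if "m+2 \<le> n" "1 \<le> b" "m+b \<le> n" for m b
    proof -
      have nm: "n - (n-m) = m" using that by simp
      have "2 \<le> n-m" "b \<le> n-m" using that by linarith+
      then have "2 \<le> n-m \<and> n-m \<le> n \<and> 1 \<le> b \<and> b \<le> n-m" using that by simp
      then have "of_nat C * Qv (n - (n-m)) b \<in> \<int>" using h unfolding exp_condition_def t by blast
      then show ?thesis unfolding nm .
    qed
    then show "C > 0 \<and> Qcond n (of_nat C)" using h unfolding exp_condition_def Qcond_def by blast
  next
    assume h: "C > 0 \<and> Qcond n (of_nat C)"
    show "exp_condition n C" unfolding exp_condition_def t
    proof (intro conjI allI impI)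
      show "C > 0" using h by simp
      fix a b assume "2 \<le> a \<and> a \<le> n \<and> 1 \<le> b \<and> b \<le> a"
      then have "(n-a)+2 \<le> n \<and> 1 \<le> b \<and> (n-a)+b \<le> n" by linarith
      then show "of_nat C * Qv (n-a) b \<in> \<int>" using h unfolding Qcond_def by blast
    qed
  qed
qed

lemma Q1: "Rcond n c \<Longrightarrow> m+b+2 \<le> n \<Longrightarrow> c * Qv m (Suc b) \<in> \<int>"
proof (induction b arbitrary: m)
  case 0 then show ?case by (simp add: Qv_1' Rcond_def)
next
  case (Suc b)
  have "c * Qv m (Suc (Suc b)) = 2 * (c * Qv (Suc m) (Suc b)) - c * Qv m (Suc b)"
    using Qv_pascal[of m "Suc b"] by (simp add: algebra_simps)
  then show ?case using Suc.IH[of "Suc m"] Suc.IH[of m] Suc.prems by auto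
qed

lemma Q2: "Rcond n c \<Longrightarrow> m+b+1 = n \<Longrightarrow> c * (2 * Qv m (Suc b)) \<in> \<int>"
proof (induction b arbitrary: m)
  case 0
  then have "m = n - 1" by simp
  then show ?case using 0 by (simp add: Qv_1' Rcond_def)
next
  case (Suc b)
  have eq: "c * (2 * Qv m (Suc (Suc b))) = 2 * (c * (2 * Qv (Suc m) (Suc b))) - 2 * (c * Qv m (Suc b))"
    using Qv_pascal[of m "Suc b"] by (simp add: algebra_simps)
  have Y: "c * Qv m (Suc b) \<in> \<int>" using Q1[OF Suc.prems(1), of m b] Suc.prems by simp
  have X: "c * (2 * Qv (Suc m) (Suc b)) \<in> \<int>" using Suc.IH[of "Suc m"] Suc.prems by auto
  have "2 * (c * (2 * Qv (Suc m) (Suc b))) - 2 * (c * Qv m (Suc b)) \<in> \<int>"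
    using Ints_diff[OF Ints_mult[OF Ints_numeral X] Ints_mult[OF Ints_numeral Y]] .
  then show ?case by (simp only: eq)
qed

lemma R_to_Q: assumes R: "Rcond n c" shows "Qcond n c"
  unfolding Qcond_def
proof (intro allI impI)
  fix m b assume h: "m+2 \<le> n \<and> 1 \<le> b \<and> m+b \<le> n"
  then obtain b' where b': "b = Suc b'" by (cases b) auto
  show "c * Qv m b \<in> \<int>"
  proof (cases "m+b'+2 \<le> n")
    case True then show ?thesis using Q1[OF R] b' by simp
  next
    case False
    then have "m+b'+1 = n" using h b' by simp
    then obtain b'' where b'': "b' = Suc b''" using h by (cases b') auto
    have "c * Qv m b = c * (2 * Qv (Suc m) (Suc b'')) - c * Qv m (Suc b'')"
      using Qv_pascal[of m "Suc b''"] b' b'' by (simp add: algebra_simps)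
    moreover have "c * (2 * Qv (Suc m) (Suc b'')) \<in> \<int>" using Q2[OF R, of "Suc m" b''] \<open>m+b'+1 = n\<close> b'' by simp
    moreover have "c * Qv m (Suc b'') \<in> \<int>" using Q1[OF R, of m b''] \<open>m+b'+1 = n\<close> b'' by simp
    ultimately show ?thesis by simp
  qed
qed

lemma Q_to_R: assumes Q: "Qcond n c" and c: "c \<in> \<int>" and n: "n \<ge> 1" shows "Rcond n c"
  unfolding Rcond_def
proof (intro conjI allI impI)
  fix k assume "k+2 \<le> n"
  then have "k+2 \<le> n \<and> 1 \<le> (1::nat) \<and> k+1 \<le> n" by simp
  then have "c * Qv k 1 \<in> \<int>" using Q unfolding Qcond_def by blast
  then show "c * Phi 0 k \<in> \<int>" by (simp add: Qv_1')
next
  show "c * (2 * Phi 0 (n-1)) \<in> \<int>"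
  proof (cases "n = 1")
    case True
    then show ?thesis using c by (simp add: Phi.simps)
  next
    case False
    then have m: "n - 1 = Suc (n-2)" using n by simp
    have "c * (2 * Phi 0 (n-1)) = c * Qv (n-2) 1 + c * Qv (n-2) 2"
      unfolding Qv_1[symmetric] m using Qv_pascal[of "n-2" 1] by (simp add: algebra_simps numeral_2_eq_2)
    moreover have "(n-2)+2 \<le> n \<and> 1 \<le> (1::nat) \<and> (n-2)+1 \<le> n" "(n-2)+2 \<le> n \<and> 1 \<le> (2::nat) \<and> (n-2)+2 \<le> n"
      using False n by auto
    then have "c * Qv (n-2) 1 \<in> \<int>" "c * Qv (n-2) 2 \<in> \<int>"
      using Q unfolding Qcond_def by blast+
    ultimately show ?thesis by simp
  qed
qed



lemma C0_R: "n \<ge> 1 \<Longrightarrow> Rcond n (of_nat (2^n * fact n))"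
proof -
  assume n: "n \<ge> 1"
  have gen: "of_nat (2^n * fact n) * Phi 0 k \<in> \<int>" if k: "k+1 \<le> n" for k
  proof -
    have "(k+1) dvd fact n" using k by (intro dvd_fact) auto
    moreover have "(2::nat)^(k+1) dvd 2^n" using k by (rule le_imp_power_dvd)
    ultimately have "(k+1) * 2^(k+1) dvd fact n * (2^n :: nat)" by (rule mult_dvd_mono)
    then have "(k+1) * 2^(k+1) dvd 2^n * (fact n :: nat)" by (simp only: mult.commute)
    then obtain M where M: "2^n * (fact n :: nat) = (k+1) * 2^(k+1) * M" by (auto elim!: dvdE)
    have "(of_nat (2^n * fact n) :: rat) = of_nat (k+1) * 2^(k+1) * of_nat M"
      unfolding M by (simp only: of_nat_mult of_nat_power of_nat_numeral)
    moreover have "(of_nat (k+1) * 2^(k+1) :: rat) \<noteq> 0" by simp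
    ultimately have "of_nat (2^n * fact n) * Phi 0 k = of_nat M * (2^(k+1) - 1)"
      unfolding Phi.simps by (simp add: field_simps)
    then show ?thesis by simp
  qed
  show ?thesis unfolding Rcond_def
  proof (intro conjI allI impI)
    fix k assume "k+2 \<le> n" then show "of_nat (2^n * fact n) * Phi 0 k \<in> \<int>" using gen by simp
  next
    have "of_nat (2^n * fact n) * Phi 0 (n-1) \<in> \<int>" using gen n by simp
    then have "2 * (of_nat (2^n * fact n) * Phi 0 (n-1)) \<in> \<int>" by (rule Ints_mult[OF Ints_numeral])
    then show "of_nat (2^n * fact n) * (2 * Phi 0 (n-1)) \<in> (\<int>::rat set)" by (simp add: algebra_simps)
  qed
qed

lemma good_iff:
  assumes n: "n \<ge> 1"
  shows "(C > 0 \<and> (\<forall>x. coker_torsion n x \<longrightarrow> in_lap_image n (\<lambda>u. int C * x u))) \<longleftrightarrow> exp_condition n C"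
proof
  define C0 :: nat where "C0 = 2^n * fact n"
  have C0pos: "C0 > 0" unfolding C0_def by simp
  have HZ0: "HZ n (of_nat C0)" unfolding C0_def using C0_R[OF n] R_to_S S_to_HZ by blast
  have tors: "coker_torsion n (\<lambda>t. (if t = u then 1 else 0) - (if t = v then 1 else 0))"
    if "u \<in> hyp_vertices n" "v \<in> hyp_vertices n" for u v
  proof -
    have "(\<Sum>t\<in>hyp_vertices n. (if t = u then 1 else 0) - (if t = v then (1::int) else 0)) = 0"
      using that finV by (simp add: sum_subtractf)
    then have "in_lap_image n (\<lambda>w. int C0 * ((if w = u then 1 else 0) - (if w = v then 1 else 0)))"
      by (rule HZ_image[OF n HZ0])
    then show ?thesis unfolding coker_torsion_def using C0pos by blast
  qed
  assume h: "C > 0 \<and> (\<forall>x. coker_torsion n x \<longrightarrow> in_lap_image n (\<lambda>u. int C * x u))"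
  have "HZ n (of_nat C)" using good_to_HZ[OF n _ tors] h by blast
  then have "Rcond n (of_nat C)" using HZ_to_S S_to_R n by blast
  then show "exp_condition n C" using R_to_Q exp_cond_iff h by blast
next
  assume h: "exp_condition n C"
  then have C: "C > 0" "Qcond n (of_nat C)" using exp_cond_iff by auto
  then have "Rcond n (of_nat C)" using Q_to_R n by simp
  then have HZ: "HZ n (of_nat C)" using R_to_S S_to_HZ by blast
  show "C > 0 \<and> (\<forall>x. coker_torsion n x \<longrightarrow> in_lap_image n (\<lambda>u. int C * x u))"
    using C(1) HZ_image[OF n HZ] torsion_sum0 by blast
qed

theorem mainTheorem11:
  fixes n :: nat
  assumes "n \<ge> 1"
  shows "exp_condition n (sandpile_exponent n) \<and>
         (\<forall>C. exp_condition n C \<longrightarrow> sandpile_exponent n \<le> C)"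
proof -
  have eq: "sandpile_exponent n = (LEAST C. exp_condition n C)"
    unfolding sandpile_exponent_def using good_iff[OF assms] by simp
  have ex: "exp_condition n (2^n * fact n)"
    using exp_cond_iff R_to_Q C0_R[OF assms] by simp
  show ?thesis unfolding eq using LeastI[of "exp_condition n", OF ex] Least_le[of "exp_condition n"] by blast
qed

end
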